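(* Let $B$ be a graph having a path-decomposition of width $p$ and a proper $2$-coloring into stable sets $C_1, C_2$ with $|C_1| \ge |C_2|$. Then for every non-negative integer $a$ with $|C_2| - p \le a \le |C_1|$, there exist a set $X$ of at most $p$ vertices of $B$ and a proper $2$-coloring of $B\setminus X$ into stable sets $C'_1, C'_2$ with $|C'_1| = a$. *)

theory Defs
  imports Main
begin

definition graph :: "'a set \<Rightarrow> ('a \<Rightarrow> 'a \<Rightarrow> bool) \<Rightarrow> bool" where
  "graph V E \<longleftrightarrow> finite V \<and> (\<forall>u v. E u v \<longrightarrow> u \<in> V \<and> v \<in> V \<and> u \<noteq> v \<and> E v u)"

definition stable :: "('a \<Rightarrow> 'a \<Rightarrow> bool) \<Rightarrow> 'a set \<Rightarrow> bool" where
  "stable E S \<longleftrightarrow> (\<forall>u\<in>S. \<forall>v\<in>S. \<not> E u v)"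

definition proper_2_coloring :: "'a set \<Rightarrow> ('a \<Rightarrow> 'a \<Rightarrow> bool) \<Rightarrow> 'a set \<Rightarrow> 'a set \<Rightarrow> bool" where
  "proper_2_coloring W E C1 C2 \<longleftrightarrow>
     C1 \<union> C2 = W \<and> C1 \<inter> C2 = {} \<and> stable E C1 \<and> stable E C2"

definition path_decomposition :: "'a set \<Rightarrow> ('a \<Rightarrow> 'a \<Rightarrow> bool) \<Rightarrow> 'a set list \<Rightarrow> bool" where
  "path_decomposition V E bs \<longleftrightarrow>
     bs \<noteq> [] \<and> (\<forall>b\<in>set bs. b \<subseteq> V) \<and>
     (\<forall>v\<in>V. \<exists>b\<in>set bs. v \<in> b) \<and>
     (\<forall>u v. E u v \<longrightarrow> (\<exists>b\<in>set bs. u \<in> b \<and> v \<in> b)) \<and>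
     (\<forall>v i j k. i \<le> j \<and> j \<le> k \<and> k < length bs \<and> v \<in> bs ! i \<and> v \<in> bs ! k \<longrightarrow> v \<in> bs ! j)"

definition pd_width :: "'a set list \<Rightarrow> int" where
  "pd_width bs = int (Max (card ` set bs)) - 1"

end

theory Submission
  imports Defs
begin

context
  fixes V :: "'a set" and E :: "'a \<Rightarrow> 'a \<Rightarrow> bool" and bs :: "'a set list"
    and p :: nat and C1 C2 :: "'a set"
  assumes G: "graph V E" and PD: "path_decomposition V E bs" and WD: "pd_width bs = int p"
    and COL: "proper_2_coloring V E C1 C2"
begin

definition fi :: "'a \<Rightarrow> nat" where "fi v = (LEAST i. v \<in> bs!i)"

lemma fi_le: "v \<in> bs!i \<Longrightarrow> fi v \<le> i"
  unfolding fi_def by (rule Least_le)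

lemma fi_props: "v \<in> V \<Longrightarrow> fi v < length bs \<and> v \<in> bs!(fi v)"
proof -
  assume "v \<in> V"
  with PD obtain b where "b \<in> set bs" "v \<in> b" unfolding path_decomposition_def by blast
  then obtain i where i: "i < length bs" "bs!i = b" by (auto simp: in_set_conv_nth)
  hence "v \<in> bs!i" using \<open>v \<in> b\<close> by simp
  hence "v \<in> bs!(fi v)" unfolding fi_def by (rule LeastI)
  moreover have "fi v \<le> i" using \<open>v \<in> bs!i\<close> by (rule fi_le)
  ultimately show ?thesis using i by simp
qed

lemma bag_card: "i < length bs \<Longrightarrow> card (bs!i) \<le> Suc p"
proof -
  assume i: "i < length bs"
  have "card (bs!i) \<le> Max (card ` set bs)"
    using i by (intro Max_ge) auto
  moreover have "int (Max (card ` set bs)) = int p + 1" using WD unfolding pd_width_def by simp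
  ultimately show ?thesis by simp
qed

definition Bd :: "'a set \<Rightarrow> 'a set" where "Bd P = {u\<in>P. \<exists>w\<in>V-P. E u w}"
definition Wc :: "'a set \<Rightarrow> 'a set" where "Wc P = (C1-P) \<union> (C2\<inter>P)"
definition Dc :: "'a set \<Rightarrow> 'a set" where "Dc P = Wc P - Bd P"
definition invp :: "'a set \<Rightarrow> bool" where
  "invp P \<longleftrightarrow> P \<subseteq> V \<and> (\<forall>u\<in>P. \<forall>w\<in>V-P. fi u \<le> fi w)"

lemma finV: "finite V" using G unfolding graph_def by simp

lemma step:
  assumes "invp P" "P \<noteq> V"
  shows "\<exists>v\<in>V-P. invp (insert v P) \<and> card (Bd P) \<le> p"
proof -
  have PV: "P \<subseteq> V" using assms unfolding invp_def by simp
  then obtain v0 where "v0 \<in> V - P" using assms by blast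
  then obtain v where v: "v \<in> V - P" and vmin: "\<And>w. w \<in> V - P \<Longrightarrow> fi v \<le> fi w"
    using ex_has_least_nat[of "\<lambda>x. x \<in> V - P" v0 fi] by blast
  have inv': "invp (insert v P)"
    using assms(1) v vmin unfolding invp_def by auto
  have fv: "fi v < length bs" "v \<in> bs!(fi v)" using fi_props v by auto
  have sub: "Bd P \<subseteq> bs!(fi v) - {v}"
  proof
    fix u assume "u \<in> Bd P"
    then obtain w where u: "u \<in> P" and w: "w \<in> V - P" and e: "E u w" unfolding Bd_def by blast
    have uV: "u \<in> V" using u PV by blast
    have "fi u \<le> fi v" using assms(1) u v unfolding invp_def by blast
    have "fi v \<le> fi w" using vmin w by blast
    obtain b where b: "b \<in> set bs" "u \<in> b" "w \<in> b" using PD e unfolding path_decomposition_def by blast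
    then obtain i where i: "i < length bs" "bs!i = b" by (auto simp: in_set_conv_nth)
    have "fi w \<le> i" using b i fi_le by auto
    have "u \<in> bs!(fi u)" using fi_props uV by blast
    moreover have "u \<in> bs!i" using i b by simp
    moreover have "fi v \<le> i" using \<open>fi v \<le> fi w\<close> \<open>fi w \<le> i\<close> by simp
    moreover have cons: "\<forall>v i j k. i \<le> j \<and> j \<le> k \<and> k < length bs \<and> v \<in> bs ! i \<and> v \<in> bs ! k \<longrightarrow> v \<in> bs ! j"
      using PD unfolding path_decomposition_def by blast
    ultimately have "u \<in> bs!(fi v)"
      using \<open>fi u \<le> fi v\<close> i(1) by blast
    moreover have "u \<noteq> v" using u v by blast
    ultimately show "u \<in> bs!(fi v) - {v}" by blast
  qed
  have finb: "finite (bs!(fi v))"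
  proof -
    have "bs!(fi v) \<in> set bs" using fv by simp
    hence "bs!(fi v) \<subseteq> V" using PD unfolding path_decomposition_def by blast
    thus ?thesis using finV by (rule finite_subset)
  qed
  have "card (Bd P) \<le> card (bs!(fi v) - {v})"
    using sub finb by (intro card_mono) auto
  also have "\<dots> = card (bs!(fi v)) - 1" using fv finb by simp
  also have "\<dots> \<le> p" using bag_card[OF fv(1)] by simp
  finally have "card (Bd P) \<le> p" .
  then show ?thesis using v inv' by blast
qed

lemma solution:
  assumes PV: "P \<subseteq> V" and "card (Bd P) \<le> p" and a1: "a \<le> card (Dc P)"
    and a2: "card (Dc P) - a + card (Bd P) \<le> p"
  shows "\<exists>X C1' C2'. X \<subseteq> V \<and> card X \<le> p \<and>
           proper_2_coloring (V - X) E C1' C2' \<and> card C1' = a"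
proof -
  have "Dc P \<subseteq> V" using COL unfolding Dc_def Wc_def proper_2_coloring_def by blast
  hence finD: "finite (Dc P)" using finV by (rule finite_subset)
  obtain Y where Y: "Y \<subseteq> Dc P" "card Y = card (Dc P) - a"
    using obtain_subset_with_card_n[of "card (Dc P) - a" "Dc P"] by auto
  define X where "X = Bd P \<union> Y"
  define C1' where "C1' = Dc P - Y"
  define C2' where "C2' = ((C2-P) \<union> (C1\<inter>P)) - X"
  have c1: "C1 \<union> C2 = V" "C1 \<inter> C2 = {}" "stable E C1" "stable E C2"
    using COL unfolding proper_2_coloring_def by auto
  have sym: "\<And>u w. E u w \<Longrightarrow> E w u" using G unfolding graph_def by blast
  have XV: "X \<subseteq> V" unfolding X_def using Y PV c1 unfolding Bd_def Dc_def Wc_def by auto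
  have "card X \<le> card (Bd P) + card Y" unfolding X_def by (rule card_Un_le)
  hence cX: "card X \<le> p" using Y a2 by simp
  have cC: "card C1' = a" unfolding C1'_def using Y finD a1
    by (simp add: card_Diff_subset finite_subset)
  have C1'eq: "C1' = ((C1-P) \<union> (C2\<inter>P)) - X"
    unfolding C1'_def X_def Dc_def Wc_def using Y(1) unfolding Dc_def Wc_def by auto
  have "proper_2_coloring (V - X) E C1' C2'"
    unfolding proper_2_coloring_def
  proof (intro conjI)
    show "C1' \<union> C2' = V - X" unfolding C1'eq C2'_def using c1 by auto
    show "C1' \<inter> C2' = {}" unfolding C1'eq C2'_def using c1 by auto
    show "stable E C1'" unfolding stable_def
    proof (intro ballI notI)
      fix u w assume u: "u \<in> C1'" and w: "w \<in> C1'" and e: "E u w"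
      have uV: "u \<in> V" "w \<in> V" using e G unfolding graph_def by auto
      have nb: "u \<notin> Bd P" "w \<notin> Bd P" using u w unfolding C1'eq X_def by auto
      show False
      proof (cases "u \<in> P")
        case True
        show False
        proof (cases "w \<in> P")
          case True
          then show False using \<open>u \<in> P\<close> u w e c1(4) unfolding C1'eq stable_def by auto
        next
          case False
          then show False using \<open>u \<in> P\<close> nb uV e unfolding Bd_def by auto
        qed
      next
        case False
        show False
        proof (cases "w \<in> P")
          case True
          then show False using \<open>u \<notin> P\<close> nb uV sym[OF e] unfolding Bd_def by auto
        next
          case False
          then show False using \<open>u \<notin> P\<close> u w e c1(3) unfolding C1'eq stable_def by auto
        qed
      qed
    qed
    show "stable E C2'" unfolding stable_def
    proof (intro ballI notI)
      fix u w assume u: "u \<in> C2'" and w: "w \<in> C2'" and e: "E u w"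
      have uV: "u \<in> V" "w \<in> V" using e G unfolding graph_def by auto
      have nb: "u \<notin> Bd P" "w \<notin> Bd P" using u w unfolding C2'_def X_def by auto
      show False
      proof (cases "u \<in> P")
        case True
        show False
        proof (cases "w \<in> P")
          case True
          then show False using \<open>u \<in> P\<close> u w e c1(3) unfolding C2'_def stable_def by auto
        next
          case False
          then show False using \<open>u \<in> P\<close> nb uV e unfolding Bd_def by auto
        qed
      next
        case False
        show False
        proof (cases "w \<in> P")
          case True
          then show False using \<open>u \<notin> P\<close> nb uV sym[OF e] unfolding Bd_def by auto
        next
          case False
          then show False using \<open>u \<notin> P\<close> u w e c1(4) unfolding C2'_def stable_def by auto
        qed
      qed
    qed
  qed
  thus ?thesis using XV cX cC by blast
qed

lemma main:
  assumes "card C2 \<le> p + a"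
  shows "invp P \<Longrightarrow> a \<le> card (Dc P) \<Longrightarrow> \<exists>X C1' C2'. X \<subseteq> V \<and> card X \<le> p \<and>
           proper_2_coloring (V - X) E C1' C2' \<and> card C1' = a"
proof (induction "card (V - P)" arbitrary: P rule: less_induct)
  case less
  have PV: "P \<subseteq> V" using less.prems unfolding invp_def by simp
  have c1: "C1 \<union> C2 = V" "C1 \<inter> C2 = {}"
    using COL unfolding proper_2_coloring_def by auto
  show ?case
  proof (cases "P = V")
    case True
    have "Bd P = {}" using True unfolding Bd_def by auto
    moreover have "Dc P = C2" using True c1 calculation unfolding Dc_def Wc_def by auto
    ultimately show ?thesis using solution[OF PV] less.prems assms by simp
  next
    case False
    obtain v where v: "v \<in> V - P" and inv': "invp (insert v P)" and cB: "card (Bd P) \<le> p"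
      using step[OF less.prems(1) False] by blast
    have lt: "card (V - insert v P) < card (V - P)"
      using v finV by (intro psubset_card_mono) auto
    show ?thesis
    proof (cases "a \<le> card (Dc (insert v P))")
      case True
      then show ?thesis using less.hyps[OF lt inv'] by blast
    next
      case False
      have "Dc P - {v} \<subseteq> Dc (insert v P)"
        unfolding Dc_def Wc_def Bd_def by auto
      hence "card (Dc P - {v}) \<le> card (Dc (insert v P))"
        using finV c1 unfolding Dc_def Wc_def
        by (intro card_mono) (auto intro: finite_subset)
      moreover have "Dc P \<subseteq> V" using COL unfolding Dc_def Wc_def proper_2_coloring_def by blast
      hence finDP: "finite (Dc P)" using finV by (rule finite_subset)
      have "card (Dc P) \<le> card (Dc P - {v}) + 1"
      proof (cases "v \<in> Dc P")
        case True
        then show ?thesis using card_Suc_Diff1[OF finDP True] by simp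
      next
        case False
        then show ?thesis by simp
      qed
      ultimately have "card (Dc P) \<le> card (Dc (insert v P)) + 1" by simp
      hence "card (Dc P) - a = 0" using False by simp
      thus ?thesis using solution[OF PV cB less.prems(2)] cB by simp
    qed
  qed
qed

lemma final:
  assumes "card C2 \<le> p + a" "a \<le> card C1"
  shows "\<exists>X C1' C2'. X \<subseteq> V \<and> card X \<le> p \<and>
           proper_2_coloring (V - X) E C1' C2' \<and> card C1' = a"
proof -
  have i0: "invp {}" unfolding invp_def by simp
  have "Dc {} = C1" unfolding Dc_def Wc_def Bd_def by simp
  hence "a \<le> card (Dc {})" using assms by simp
  thus ?thesis using main[OF assms(1) i0] by blast
qed

end

theorem lemma1:
  fixes V :: "'a set" and E :: "'a \<Rightarrow> 'a \<Rightarrow> bool" and bs :: "'a set list"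
    and p :: nat and C1 C2 :: "'a set" and a :: nat
  assumes "graph V E"
    and "path_decomposition V E bs" and "pd_width bs = int p"
    and "proper_2_coloring V E C1 C2" and "card C1 \<ge> card C2"
    and "int (card C2) - int p \<le> int a" and "a \<le> card C1"
  shows "\<exists>X C1' C2'. X \<subseteq> V \<and> card X \<le> p \<and>
           proper_2_coloring (V - X) E C1' C2' \<and> card C1' = a"
proof -
  have "card C2 \<le> p + a" using assms(6) by simp
  thus ?thesis using final[OF assms(1-4)] assms(7) by blast
qed

end
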